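(* Let $G$ be a complex, simply-connected, simple Lie group with Borel subgroup $B$, maximal torus $\mathbb{T}\subset B$, simple roots $\Delta$ and Weyl group $W$ with Bruhat order $\le$ and longest element $w_0$. For any parabolic subgroup $P\supseteq B$ (with corresponding $\Delta_P\subsetneq\Delta$ and $w_P$ the longest element of $W_P$) we have $\Gamma(w_0w_P)=\Delta$.
   Context: $W_P$ is the subgroup of $W$ generated by $s_\alpha$, $\alpha\in\Delta_P$. For $v\in W$, $\Gamma(v):=\{\alpha\in\Delta\mid s_\alpha\le v\}$, where $s_\alpha$ is the simple reflection associated with $\alpha$. *)

theory Defs
  imports "HOL-Analysis.Analysis"
begin

definition refl :: "'a::euclidean_space \<Rightarrow> 'a \<Rightarrow> 'a" where
  "refl \<alpha> x = x - (2 * (x \<bullet> \<alpha>) / (\<alpha> \<bullet> \<alpha>)) *\<^sub>R \<alpha>"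

definition root_system :: "'a::euclidean_space set \<Rightarrow> bool" where
  "root_system \<Phi> \<longleftrightarrow> finite \<Phi> \<and> 0 \<notin> \<Phi> \<and> span \<Phi> = UNIV \<and>
     (\<forall>\<alpha>\<in>\<Phi>. \<forall>\<beta>\<in>\<Phi>. refl \<alpha> \<beta> \<in> \<Phi> \<and> 2 * (\<beta> \<bullet> \<alpha>) / (\<alpha> \<bullet> \<alpha>) \<in> \<int>) \<and>
     (\<forall>\<alpha>\<in>\<Phi>. \<forall>c. c *\<^sub>R \<alpha> \<in> \<Phi> \<longrightarrow> c = 1 \<or> c = -1)"

definition irreducible_rs :: "'a::euclidean_space set \<Rightarrow> bool" where
  "irreducible_rs \<Phi> \<longleftrightarrow> \<not> (\<exists>A B. A \<noteq> {} \<and> B \<noteq> {} \<and> A \<union> B = \<Phi> \<and> A \<inter> B = {} \<and>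
       (\<forall>a\<in>A. \<forall>b\<in>B. a \<bullet> b = 0))"

definition is_base :: "'a::euclidean_space set \<Rightarrow> 'a set \<Rightarrow> bool" where
  "is_base \<Phi> \<Delta> \<longleftrightarrow> \<Delta> \<subseteq> \<Phi> \<and> independent \<Delta> \<and>
     (\<forall>\<beta>\<in>\<Phi>. \<exists>c::'a \<Rightarrow> nat.
        \<beta> = (\<Sum>\<alpha>\<in>\<Delta>. real (c \<alpha>) *\<^sub>R \<alpha>) \<or> \<beta> = - (\<Sum>\<alpha>\<in>\<Delta>. real (c \<alpha>) *\<^sub>R \<alpha>))"

definition wordprod :: "'a::euclidean_space list \<Rightarrow> 'a \<Rightarrow> 'a" where
  "wordprod ws = foldr (\<lambda>\<alpha> f. refl \<alpha> \<circ> f) ws id"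

text \<open>Group generated by the reflections in the set S (used for W and for W_P).\<close>
definition weyl :: "'a::euclidean_space set \<Rightarrow> ('a \<Rightarrow> 'a) set" where
  "weyl S = {wordprod ws | ws. set ws \<subseteq> S}"

definition len :: "'a::euclidean_space set \<Rightarrow> ('a \<Rightarrow> 'a) \<Rightarrow> nat" where
  "len \<Delta> w = (LEAST n. \<exists>ws. set ws \<subseteq> \<Delta> \<and> length ws = n \<and> wordprod ws = w)"

definition bruhat_step :: "'a::euclidean_space set \<Rightarrow> 'a set \<Rightarrow> ('a \<Rightarrow> 'a) \<Rightarrow> ('a \<Rightarrow> 'a) \<Rightarrow> bool" where
  "bruhat_step \<Phi> \<Delta> v w \<longleftrightarrow> (\<exists>\<beta>\<in>\<Phi>. w = v \<circ> refl \<beta>) \<and> len \<Delta> v < len \<Delta> w"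

definition bruhat_le :: "'a::euclidean_space set \<Rightarrow> 'a set \<Rightarrow> ('a \<Rightarrow> 'a) \<Rightarrow> ('a \<Rightarrow> 'a) \<Rightarrow> bool" where
  "bruhat_le \<Phi> \<Delta> v w \<longleftrightarrow> v \<in> weyl \<Delta> \<and> (bruhat_step \<Phi> \<Delta>)\<^sup>*\<^sup>* v w"

definition Gamma :: "'a::euclidean_space set \<Rightarrow> 'a set \<Rightarrow> ('a \<Rightarrow> 'a) \<Rightarrow> 'a set" where
  "Gamma \<Phi> \<Delta> v = {\<alpha>\<in>\<Delta>. bruhat_le \<Phi> \<Delta> (refl \<alpha>) v}"

end

theory Submission
  imports Defs
begin

lemma refl_linear: "linear (refl a)"
  by (rule linearI) (auto simp: refl_def inner_add_left algebra_simps add_divide_distrib scaleR_add_left[symmetric] simp del: scaleR_add_left)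

lemma refl_inner:
  assumes "a \<noteq> 0" shows "refl a x \<bullet> refl a y = x \<bullet> y"
  using assms by (simp add: refl_def inner_diff_left inner_diff_right inner_commute field_simps power2_eq_square)

lemma refl_refl: assumes "a \<noteq> 0" shows "refl a (refl a x) = x"
  using assms by (simp add: refl_def inner_diff_left field_simps)

lemma refl_self: assumes "a \<noteq> 0" shows "refl a a = - a"
  using assms by (simp add: refl_def algebra_simps scaleR_2)

lemma refl_conj:
  assumes "linear f" "\<And>x y. f x \<bullet> f y = x \<bullet> y"
  shows "f (refl d x) = refl (f d) (f x)"
  using assms by (simp add: refl_def linear_diff linear_scale)

lemma wordprod_Nil[simp]: "wordprod [] = id" by (simp add: wordprod_def)
lemma wordprod_Cons[simp]: "wordprod (a # ws) = refl a \<circ> wordprod ws" by (simp add: wordprod_def)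
lemma wordprod_append: "wordprod (xs @ ys) = wordprod xs \<circ> wordprod ys"
  by (induction xs) auto

lemma wordprod_linear: "linear (wordprod ws)"
proof (induction ws)
  case Nil
  show ?case by (simp add: id_def bounded_linear.linear[OF bounded_linear_ident])
next
  case (Cons a ws)
  show ?case unfolding wordprod_Cons by (rule linear_compose[OF Cons.IH refl_linear])
qed

lemma wordprod_inner: "0 \<notin> set ws \<Longrightarrow> wordprod ws x \<bullet> wordprod ws y = x \<bullet> y"
  by (induction ws) (auto simp: refl_inner)

lemma wordprod_rev_inv: "0 \<notin> set ws \<Longrightarrow> wordprod (rev ws) (wordprod ws x) = x"
  by (induction ws arbitrary: x) (auto simp: wordprod_append refl_refl)

lemma wordprod_inv_rev: "0 \<notin> set ws \<Longrightarrow> wordprod ws (wordprod (rev ws) x) = x"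
  using wordprod_rev_inv[of "rev ws"] by simp

locale RS =
  fixes \<Phi> \<Delta> :: "'a::euclidean_space set"
  assumes rs: "root_system \<Phi>" and base: "is_base \<Phi> \<Delta>"
begin

lemma finPhi: "finite \<Phi>" using rs by (simp add: root_system_def)
lemma zero_notin: "0 \<notin> \<Phi>" using rs by (simp add: root_system_def)
lemma Phi_nz: "a \<in> \<Phi> \<Longrightarrow> a \<noteq> 0" using zero_notin by auto
lemma Phi_refl: "a \<in> \<Phi> \<Longrightarrow> b \<in> \<Phi> \<Longrightarrow> refl a b \<in> \<Phi>" using rs by (simp add: root_system_def)
lemma Phi_reduced: "a \<in> \<Phi> \<Longrightarrow> c *\<^sub>R a \<in> \<Phi> \<Longrightarrow> c = 1 \<or> c = -1"
  using rs by (simp add: root_system_def)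
lemma Phi_uminus: "a \<in> \<Phi> \<Longrightarrow> - a \<in> \<Phi>"
  using Phi_refl[of a a] refl_self[of a] Phi_nz by auto
lemma Delta_sub: "\<Delta> \<subseteq> \<Phi>" using base by (simp add: is_base_def)
lemma indep: "independent \<Delta>" using base by (simp add: is_base_def)
lemma finD: "finite \<Delta>" using Delta_sub finPhi finite_subset by auto

lemma Phi_span: "\<gamma> \<in> \<Phi> \<Longrightarrow> \<gamma> \<in> span \<Delta>"
proof -
  assume "\<gamma> \<in> \<Phi>"
  then obtain c :: "'a \<Rightarrow> nat" where
    "\<gamma> = (\<Sum>\<alpha>\<in>\<Delta>. real (c \<alpha>) *\<^sub>R \<alpha>) \<or> \<gamma> = - (\<Sum>\<alpha>\<in>\<Delta>. real (c \<alpha>) *\<^sub>R \<alpha>)"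
    using base by (auto simp: is_base_def)
  moreover have "(\<Sum>\<alpha>\<in>\<Delta>. real (c \<alpha>) *\<^sub>R \<alpha>) \<in> span \<Delta>"
    by (intro span_sum span_scale span_base)
  ultimately show ?thesis using span_neg by metis
qed

lemma span_all: "x \<in> span \<Delta>"
proof -
  have "span \<Phi> \<subseteq> span \<Delta>" using Phi_span by (intro span_minimal) auto
  moreover have "span \<Phi> = UNIV" using rs by (simp add: root_system_def)
  ultimately show ?thesis by auto
qed

abbreviation coef :: "'a \<Rightarrow> 'a \<Rightarrow> real" where "coef d x \<equiv> representation \<Delta> x d"

lemma coef_add: "coef b (x + y) = coef b x + coef b y"
  by (simp add: representation_add[OF indep span_all span_all])
lemma coef_diff: "coef b (x - y) = coef b x - coef b y"
  by (simp add: representation_diff[OF indep span_all span_all])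
lemma coef_scale: "coef b (r *\<^sub>R x) = r * coef b x"
  by (simp add: representation_scale[OF indep span_all])
lemma coef_uminus: "coef b (- x) = - coef b x"
  by (simp add: representation_neg[OF indep span_all])
lemma coef_sum: "coef b (sum f I) = (\<Sum>i\<in>I. coef b (f i))"
  by (simp add: representation_sum[OF indep span_all])
lemma coef_basis: "d \<in> \<Delta> \<Longrightarrow> coef b d = (if b = d then 1 else 0)"
  by (simp add: representation_basis[OF indep])
lemma expand: "(\<Sum>d\<in>\<Delta>. coef d x *\<^sub>R d) = x"
  by (rule sum_representation_eq[OF indep span_all finD order_refl])

lemma coef_of_sum: "b \<in> \<Delta> \<Longrightarrow> coef b (\<Sum>d\<in>\<Delta>. c d *\<^sub>R d) = c b"
proof -
  assume b: "b \<in> \<Delta>"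
  have "coef b (\<Sum>d\<in>\<Delta>. c d *\<^sub>R d) = (\<Sum>d\<in>\<Delta>. c d * (if b = d then 1 else 0))"
    by (simp add: coef_sum coef_scale coef_basis)
  also have "\<dots> = (\<Sum>d\<in>\<Delta>. if b = d then c d else 0)" by (rule sum.cong) auto
  also have "\<dots> = c b" using b finD by simp
  finally show ?thesis .
qed

lemma root_sign: "\<gamma> \<in> \<Phi> \<Longrightarrow> (\<forall>b\<in>\<Delta>. coef b \<gamma> \<ge> 0) \<or> (\<forall>b\<in>\<Delta>. coef b \<gamma> \<le> 0)"
proof -
  assume "\<gamma> \<in> \<Phi>"
  then obtain c :: "'a \<Rightarrow> nat" where
    "\<gamma> = (\<Sum>\<alpha>\<in>\<Delta>. real (c \<alpha>) *\<^sub>R \<alpha>) \<or> \<gamma> = - (\<Sum>\<alpha>\<in>\<Delta>. real (c \<alpha>) *\<^sub>R \<alpha>)"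
    using base by (auto simp: is_base_def)
  then show ?thesis
    by (auto simp: coef_of_sum coef_uminus)
qed

lemma zero_coefs: "(\<forall>b\<in>\<Delta>. coef b x = 0) \<Longrightarrow> x = 0"
proof -
  assume "\<forall>b\<in>\<Delta>. coef b x = 0"
  then have "(\<Sum>d\<in>\<Delta>. coef d x *\<^sub>R d) = 0" by simp
  then show ?thesis by (simp only: expand)
qed

definition pos where "pos \<gamma> \<longleftrightarrow> \<gamma> \<in> \<Phi> \<and> (\<forall>b\<in>\<Delta>. coef b \<gamma> \<ge> 0)"
definition neg where "neg \<gamma> \<longleftrightarrow> \<gamma> \<in> \<Phi> \<and> (\<forall>b\<in>\<Delta>. coef b \<gamma> \<le> 0)"

lemma pos_or_neg: "\<gamma> \<in> \<Phi> \<Longrightarrow> pos \<gamma> \<or> neg \<gamma>"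
  using root_sign pos_def neg_def by auto

lemma not_both: "pos \<gamma> \<Longrightarrow> neg \<gamma> \<Longrightarrow> False"
proof -
  assume "pos \<gamma>" "neg \<gamma>"
  then have "\<forall>b\<in>\<Delta>. coef b \<gamma> = 0" "\<gamma> \<in> \<Phi>" unfolding pos_def neg_def by (auto intro: order.antisym)
  then show False using zero_coefs zero_notin by auto
qed

lemma pos_coef: "\<gamma> \<in> \<Phi> \<Longrightarrow> b \<in> \<Delta> \<Longrightarrow> coef b \<gamma> > 0 \<Longrightarrow> pos \<gamma>"
  using pos_or_neg[of \<gamma>] unfolding neg_def by force

lemma neg_uminus: "neg (- \<gamma>) \<longleftrightarrow> pos \<gamma>"
  unfolding pos_def neg_def using Phi_uminus[of "-\<gamma>"] Phi_uminus[of \<gamma>]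
  by (auto simp: coef_uminus)

lemma pos_simple: "a \<in> \<Delta> \<Longrightarrow> pos a"
  using Delta_sub by (auto simp: pos_def coef_basis)

lemma coef_refl: "coef b (refl d x) = coef b x - (2 * (x \<bullet> d) / (d \<bullet> d)) * coef b d"
  by (simp add: refl_def coef_diff coef_scale)

lemma coef_refl_other: "d \<in> \<Delta> \<Longrightarrow> b \<noteq> d \<Longrightarrow> coef b (refl d x) = coef b x"
  by (simp add: coef_refl coef_basis)

lemma coef_refl_same: "d \<in> \<Delta> \<Longrightarrow> coef d (refl d x) = coef d x - 2 * (x \<bullet> d) / (d \<bullet> d)"
  by (simp add: coef_refl coef_basis)

lemma single_support:
  assumes "\<gamma> \<in> \<Phi>" "d \<in> \<Delta>" "\<forall>b\<in>\<Delta>. b \<noteq> d \<longrightarrow> coef b \<gamma> = 0"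
  shows "\<gamma> = d \<or> \<gamma> = - d"
proof -
  have "\<gamma> = (\<Sum>b\<in>\<Delta>. coef b \<gamma> *\<^sub>R b)" by (simp only: expand)
  also have "\<dots> = (\<Sum>b\<in>\<Delta>. if b = d then coef d \<gamma> *\<^sub>R d else 0)"
    using assms(3) by (intro sum.cong) auto
  also have "\<dots> = coef d \<gamma> *\<^sub>R d" using assms(2) finD by simp
  finally have g: "\<gamma> = coef d \<gamma> *\<^sub>R d" .
  then have "coef d \<gamma> = 1 \<or> coef d \<gamma> = -1"
    using Phi_reduced[of d "coef d \<gamma>"] assms Delta_sub by auto
  then show ?thesis using g by auto
qed

lemma refl_pos:
  assumes d: "d \<in> \<Delta>" and p: "pos \<gamma>" and ne: "\<gamma> \<noteq> d"
  shows "pos (refl d \<gamma>)"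
proof -
  have g: "\<gamma> \<in> \<Phi>" using p pos_def by auto
  have "\<exists>b\<in>\<Delta>. b \<noteq> d \<and> coef b \<gamma> \<noteq> 0"
  proof (rule ccontr)
    assume "\<not> ?thesis"
    then have "\<gamma> = d \<or> \<gamma> = - d" using single_support[OF g d] by auto
    moreover have "\<gamma> \<noteq> - d"
    proof
      assume "\<gamma> = - d"
      then have "coef d \<gamma> = -1" using d by (simp add: coef_uminus coef_basis)
      then show False using p d by (auto simp: pos_def)
    qed
    ultimately show False using ne by auto
  qed
  then obtain b where b: "b \<in> \<Delta>" "b \<noteq> d" "coef b \<gamma> \<noteq> 0" by auto
  then have "coef b \<gamma> > 0" using p by (auto simp: pos_def less_le)
  then have "coef b (refl d \<gamma>) > 0" using coef_refl_other[OF d b(2)] by simp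
  moreover have "refl d \<gamma> \<in> \<Phi>" using Phi_refl d g Delta_sub by auto
  ultimately show ?thesis using pos_coef b by auto
qed

lemma wordprod_Phi: "set ws \<subseteq> \<Phi> \<Longrightarrow> b \<in> \<Phi> \<Longrightarrow> wordprod ws b \<in> \<Phi>"
  by (induction ws) (auto intro: Phi_refl)

lemma nz_set: "set ws \<subseteq> \<Phi> \<Longrightarrow> 0 \<notin> set ws"
  using zero_notin by auto

end

context RS begin

lemma Delta_nz: "0 \<notin> \<Delta>" using Delta_sub zero_notin by auto

lemma deletion:
  assumes "set vs \<subseteq> \<Delta>" "a \<in> \<Delta>" "neg (wordprod vs a)"
  shows "\<exists>us. set us \<subseteq> \<Delta> \<and> length us < length vs \<and> wordprod us = wordprod vs \<circ> refl a"
  using assms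
proof (induction vs)
  case Nil
  then show ?case using pos_simple[of a] not_both by auto
next
  case (Cons b us)
  have b: "b \<in> \<Delta>" and us: "set us \<subseteq> \<Delta>" using Cons.prems by auto
  show ?case
  proof (cases "neg (wordprod us a)")
    case True
    obtain us' where "set us' \<subseteq> \<Delta>" "length us' < length us" "wordprod us' = wordprod us \<circ> refl a"
      using Cons.IH[OF us Cons.prems(2) True] by blast
    then show ?thesis using b by (intro exI[of _ "b # us'"]) auto
  next
    case False
    have Pus: "set us \<subseteq> \<Phi>" using us Delta_sub by auto
    have inPhi: "wordprod us a \<in> \<Phi>" using wordprod_Phi[OF Pus] Cons.prems(2) Delta_sub by auto
    then have p: "pos (wordprod us a)" using False pos_or_neg by auto
    have eq: "wordprod us a = b"
    proof (rule ccontr)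
      assume "wordprod us a \<noteq> b"
      then have "pos (refl b (wordprod us a))" using refl_pos[OF b p] by auto
      moreover have "neg (refl b (wordprod us a))" using Cons.prems(3) by simp
      ultimately show False using not_both by auto
    qed
    have conj: "wordprod us (refl a x) = refl (wordprod us a) (wordprod us x)" for x
      by (rule refl_conj[OF wordprod_linear wordprod_inner[OF nz_set[OF Pus]]])
    have eq2: "wordprod (b # us) \<circ> refl a = wordprod us"
    proof
      fix x
      have "(wordprod (b # us) \<circ> refl a) x = refl b (refl b (wordprod us x))"
        using conj[of x] eq by simp
      also have "\<dots> = wordprod us x" using refl_refl b Delta_nz by metis
      finally show "(wordprod (b # us) \<circ> refl a) x = wordprod us x" .
    qed
    have "length us < length (b # us)" by simp
    then show ?thesis using us eq2 by metis
  qed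
qed

lemma len_le: "set ws \<subseteq> \<Delta> \<Longrightarrow> len \<Delta> (wordprod ws) \<le> length ws"
  unfolding len_def by (rule Least_le) auto

lemma reduced_ex:
  assumes "w \<in> weyl \<Delta>"
  shows "\<exists>ws. set ws \<subseteq> \<Delta> \<and> length ws = len \<Delta> w \<and> wordprod ws = w"
proof -
  obtain ws0 where "set ws0 \<subseteq> \<Delta>" "wordprod ws0 = w" using assms by (auto simp: weyl_def)
  then have "\<exists>n. \<exists>ws. set ws \<subseteq> \<Delta> \<and> length ws = n \<and> wordprod ws = w" by auto
  then show ?thesis unfolding len_def by (rule LeastI_ex)
qed

lemma weyl_word: "set ws \<subseteq> \<Delta> \<Longrightarrow> wordprod ws \<in> weyl \<Delta>"
  by (auto simp: weyl_def)

lemma len_up: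
  assumes w: "w \<in> weyl \<Delta>" and a: "a \<in> \<Delta>" and p: "pos (w a)"
  shows "len \<Delta> w < len \<Delta> (w \<circ> refl a)"
proof -
  obtain ws where ws: "set ws \<subseteq> \<Delta>" "wordprod ws = w" using w by (auto simp: weyl_def)
  have "w \<circ> refl a = wordprod (ws @ [a])" using ws by (simp add: wordprod_append)
  then have v: "w \<circ> refl a \<in> weyl \<Delta>" using ws a weyl_word[of "ws @ [a]"] by auto
  obtain vs where vs: "set vs \<subseteq> \<Delta>" "length vs = len \<Delta> (w \<circ> refl a)" "wordprod vs = w \<circ> refl a"
    using reduced_ex[OF v] by auto
  have "wordprod vs a = w (refl a a)" using vs by simp
  also have "\<dots> = - w a"
  proof -
    have "refl a a = - a" using refl_self[of a] a Delta_nz by auto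
    moreover have "linear w" using ws wordprod_linear[of ws] by simp
    ultimately show ?thesis by (simp add: linear_neg)
  qed
  finally have "neg (wordprod vs a)" using p neg_uminus by simp
  then obtain us where us: "set us \<subseteq> \<Delta>" "length us < length vs" "wordprod us = wordprod vs \<circ> refl a"
    using deletion[OF vs(1) a] by auto
  have "wordprod us = w"
  proof
    fix x have anz: "a \<noteq> 0" using a Delta_nz by auto
    show "wordprod us x = w x" using us(3) vs(3) refl_refl[OF anz] by auto
  qed
  then have "len \<Delta> w \<le> length us" using len_le[OF us(1)] by simp
  then show ?thesis using us vs by simp
qed

lemma coef_fix: "set ws \<subseteq> \<Delta> \<Longrightarrow> b \<notin> set ws \<Longrightarrow> coef b (wordprod ws x) = coef b x"
  by (induction ws) (auto simp: coef_refl_other)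

lemma maps_neg:
  assumes "linear w" "\<forall>d\<in>\<Delta>. neg (w d)" "pos \<gamma>" "w \<gamma> \<in> \<Phi>"
  shows "neg (w \<gamma>)"
proof -
  have "w \<gamma> = w (\<Sum>d\<in>\<Delta>. coef d \<gamma> *\<^sub>R d)" by (simp only: expand)
  also have "\<dots> = (\<Sum>d\<in>\<Delta>. coef d \<gamma> *\<^sub>R w d)"
    using assms(1) by (simp add: linear_sum linear_scale o_def)
  finally have e: "w \<gamma> = (\<Sum>d\<in>\<Delta>. coef d \<gamma> *\<^sub>R w d)" .
  have "coef b (w \<gamma>) \<le> 0" if b: "b \<in> \<Delta>" for b
  proof -
    have "coef b (w \<gamma>) = (\<Sum>d\<in>\<Delta>. coef d \<gamma> * coef b (w d))"
      by (subst e) (simp add: coef_sum coef_scale)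
    also have "\<dots> \<le> 0"
      using assms(2,3) b by (intro sum_nonpos mult_nonneg_nonpos) (auto simp: pos_def neg_def)
    finally show ?thesis .
  qed
  then show ?thesis using assms(4) by (simp add: neg_def)
qed

lemma reduced_split:
  assumes "set (xs @ ys) \<subseteq> \<Delta>" "len \<Delta> (wordprod (xs @ ys)) = length (xs @ ys)"
  shows "len \<Delta> (wordprod xs) = length xs \<and> len \<Delta> (wordprod ys) = length ys"
proof -
  have xs: "set xs \<subseteq> \<Delta>" and ys: "set ys \<subseteq> \<Delta>" using assms by auto
  have A: "len \<Delta> (wordprod ys) = length ys"
  proof (rule ccontr)
    assume "\<not> ?thesis"
    then have lt: "len \<Delta> (wordprod ys) < length ys" using len_le[OF ys] by simp
    obtain ys' where ys': "set ys' \<subseteq> \<Delta>" "length ys' = len \<Delta> (wordprod ys)" "wordprod ys' = wordprod ys"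
      using reduced_ex[OF weyl_word[OF ys]] by auto
    have "wordprod (xs @ ys') = wordprod (xs @ ys)" using ys' by (simp add: wordprod_append)
    then have "len \<Delta> (wordprod (xs @ ys)) \<le> length (xs @ ys')" using len_le[of "xs @ ys'"] xs ys' by auto
    then show False using assms(2) lt ys' by simp
  qed
  have B: "len \<Delta> (wordprod xs) = length xs"
  proof (rule ccontr)
    assume "\<not> ?thesis"
    then have lt: "len \<Delta> (wordprod xs) < length xs" using len_le[OF xs] by simp
    obtain xs' where xs': "set xs' \<subseteq> \<Delta>" "length xs' = len \<Delta> (wordprod xs)" "wordprod xs' = wordprod xs"
      using reduced_ex[OF weyl_word[OF xs]] by auto
    have "wordprod (xs' @ ys) = wordprod (xs @ ys)" using xs' by (simp add: wordprod_append)
    then have "len \<Delta> (wordprod (xs @ ys)) \<le> length (xs' @ ys)" using len_le[of "xs' @ ys"] ys xs' by auto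
    then show False using assms(2) lt xs' by simp
  qed
  show ?thesis using A B by simp
qed

lemma chain1:
  "set (a # zs) \<subseteq> \<Delta> \<Longrightarrow> len \<Delta> (wordprod (a # zs)) = length (a # zs) \<Longrightarrow>
   (bruhat_step \<Phi> \<Delta>)\<^sup>*\<^sup>* (refl a) (wordprod (a # zs))"
proof (induction zs rule: rev_induct)
  case Nil
  then show ?case by simp
next
  case (snoc b zs)
  have r1: "set ((a # zs) @ [b]) \<subseteq> \<Delta>" unfolding append_Cons by (rule snoc.prems(1))
  have r2: "len \<Delta> (wordprod ((a # zs) @ [b])) = length ((a # zs) @ [b])"
    unfolding append_Cons by (rule snoc.prems(2))
  have red: "len \<Delta> (wordprod (a # zs)) = length (a # zs)"
    by (rule conjunct1[OF reduced_split[OF r1 r2]])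
  have s1: "set (a # zs) \<subseteq> \<Delta>" using snoc.prems by auto
  note IH = snoc.IH[OF s1 red]
  have eq: "wordprod (a # zs @ [b]) = wordprod (a # zs) \<circ> refl b"
    using wordprod_append[of "a # zs" "[b]"] by simp
  have lt: "len \<Delta> (wordprod (a # zs)) < len \<Delta> (wordprod (a # zs @ [b]))"
    unfolding snoc.prems(2) red by simp
  have bP: "b \<in> \<Phi>" using snoc.prems(1) Delta_sub by auto
  have "bruhat_step \<Phi> \<Delta> (wordprod (a # zs)) (wordprod (a # zs @ [b]))"
    unfolding bruhat_step_def using eq lt bP by blast
  then show ?case using IH by (rule rtranclp.rtrancl_into_rtrancl[rotated])
qed

lemma chain2:
  "set (xs @ vs) \<subseteq> \<Delta> \<Longrightarrow> len \<Delta> (wordprod (xs @ vs)) = length (xs @ vs) \<Longrightarrow>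
   (bruhat_step \<Phi> \<Delta>)\<^sup>*\<^sup>* (wordprod vs) (wordprod (xs @ vs))"
proof (induction xs)
  case Nil
  then show ?case by simp
next
  case (Cons b xs)
  have r1: "set ([b] @ (xs @ vs)) \<subseteq> \<Delta>" using Cons.prems(1) by (simp only: append_Cons append_Nil)
  have r2: "len \<Delta> (wordprod ([b] @ (xs @ vs))) = length ([b] @ (xs @ vs))"
    using Cons.prems(2) by (simp only: append_Cons append_Nil)
  have red: "len \<Delta> (wordprod (xs @ vs)) = length (xs @ vs)"
    by (rule conjunct2[OF reduced_split[OF r1 r2]])
  have s1: "set (xs @ vs) \<subseteq> \<Delta>" using Cons.prems by auto
  note IH = Cons.IH[OF s1 red]
  define ws where "ws = xs @ vs"
  have P: "set ws \<subseteq> \<Phi>" using Cons.prems Delta_sub ws_def by auto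
  have bP: "b \<in> \<Phi>" using Cons.prems Delta_sub by auto
  define d where "d = wordprod (rev ws) b"
  have dP: "d \<in> \<Phi>" unfolding d_def using wordprod_Phi[of "rev ws" b] P bP by auto
  have "wordprod (b # ws) = wordprod ws \<circ> refl d"
  proof
    fix x
    have "wordprod ws (refl d x) = refl (wordprod ws d) (wordprod ws x)"
      by (rule refl_conj[OF wordprod_linear wordprod_inner[OF nz_set[OF P]]])
    also have "wordprod ws d = b" unfolding d_def by (rule wordprod_inv_rev[OF nz_set[OF P]])
    finally show "wordprod (b # ws) x = (wordprod ws \<circ> refl d) x" by simp
  qed
  moreover have r3: "len \<Delta> (wordprod (b # xs @ vs)) = length (b # xs @ vs)"
    using Cons.prems(2) by (simp only: append_Cons)
  moreover have lt: "len \<Delta> (wordprod (xs @ vs)) < len \<Delta> (wordprod (b # xs @ vs))"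
    unfolding r3 red by simp
  ultimately have "bruhat_step \<Phi> \<Delta> (wordprod ws) (wordprod (b # ws))"
    unfolding bruhat_step_def using dP ws_def by blast
  then have "(bruhat_step \<Phi> \<Delta>)\<^sup>*\<^sup>* (wordprod vs) (wordprod (b # xs @ vs))"
    using IH ws_def by (metis rtranclp.rtrancl_into_rtrancl)
  then show ?case by (simp only: append_Cons)
qed

lemma subword_bruhat:
  assumes "set ws \<subseteq> \<Delta>" "len \<Delta> (wordprod ws) = length ws" "a \<in> set ws"
  shows "bruhat_le \<Phi> \<Delta> (refl a) (wordprod ws)"
proof -
  obtain xs ys where ws: "ws = xs @ a # ys" using split_list[OF assms(3)] by auto
  have red: "len \<Delta> (wordprod (a # ys)) = length (a # ys)"
    using reduced_split[of xs "a # ys"] assms ws by simp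
  have 1: "(bruhat_step \<Phi> \<Delta>)\<^sup>*\<^sup>* (refl a) (wordprod (a # ys))"
    using chain1[of a ys] red assms ws by auto
  have 2: "(bruhat_step \<Phi> \<Delta>)\<^sup>*\<^sup>* (wordprod (a # ys)) (wordprod ws)"
    using chain2[of xs "a # ys"] assms ws by auto
  have "refl a \<in> weyl \<Delta>" using weyl_word[of "[a]"] assms ws by auto
  then show ?thesis unfolding bruhat_le_def using 1 2 by auto
qed

end

context RS begin

lemma simple_inner:
  assumes d: "d \<in> \<Delta>" and b: "b \<in> \<Delta>" and ne: "d \<noteq> b"
  shows "d \<bullet> b \<le> 0"
proof (rule ccontr)
  assume "\<not> ?thesis"
  then have pos_db: "d \<bullet> b > 0" by simp
  have bnz: "b \<noteq> 0" using b Delta_nz by auto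
  then have bb: "b \<bullet> b > 0" by simp
  have c: "2 * (d \<bullet> b) / (b \<bullet> b) > 0" using pos_db bb by simp
  have r: "refl b d \<in> \<Phi>" using Phi_refl d b Delta_sub by auto
  have c1: "coef d (refl b d) = 1" using coef_refl_other[OF b ne] coef_basis[OF d] by simp
  have c2: "coef b (refl b d) = - (2 * (d \<bullet> b) / (b \<bullet> b))"
    using coef_refl_same[OF b] coef_basis[OF d] ne by simp
  show False using root_sign[OF r] c1 c2 c d b by force
qed

lemma inner_expand: "x \<bullet> y = (\<Sum>d\<in>\<Delta>. coef d x * (d \<bullet> y))"
proof -
  have "(\<Sum>d\<in>\<Delta>. coef d x *\<^sub>R d) \<bullet> y = (\<Sum>d\<in>\<Delta>. coef d x * (d \<bullet> y))"
    by (simp add: inner_sum_left)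
  then show ?thesis by (simp only: expand)
qed

definition ht where "ht x = (\<Sum>d\<in>\<Delta>. coef d x)"

lemma exists_root:
  assumes irr: "irreducible_rs \<Phi>" and a: "a \<in> \<Delta>" and S: "S \<subseteq> \<Delta>" "S \<noteq> \<Delta>"
  shows "\<exists>\<gamma>. pos \<gamma> \<and> coef a \<gamma> > 0 \<and> (\<exists>b\<in>\<Delta>-S. coef b \<gamma> > 0)"
proof (rule ccontr)
  assume H: "\<not> ?thesis"
  define T where "T = {d\<in>\<Delta>. \<exists>\<gamma>. pos \<gamma> \<and> coef a \<gamma> > 0 \<and> coef d \<gamma> \<noteq> 0}"
  have TS: "T \<subseteq> S"
  proof
    fix d assume "d \<in> T"
    then obtain \<gamma> where g: "d \<in> \<Delta>" "pos \<gamma>" "coef a \<gamma> > 0" "coef d \<gamma> \<noteq> 0" by (auto simp: T_def)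
    then have "coef d \<gamma> > 0" by (auto simp: pos_def less_le)
    then show "d \<in> S" using H g by auto
  qed
  have aT: "a \<in> T" unfolding T_def using a pos_simple[OF a] coef_basis[OF a] by (auto intro!: exI[of _ a])
  have orth: "d \<bullet> b = 0" if dT: "d \<in> T" and b: "b \<in> \<Delta>" and bT: "b \<notin> T" for d b
  proof -
    obtain \<gamma> where g: "d \<in> \<Delta>" "pos \<gamma>" "coef a \<gamma> > 0" "coef d \<gamma> \<noteq> 0" using dT by (auto simp: T_def)
    have gP: "\<gamma> \<in> \<Phi>" using g pos_def by auto
    have cb: "coef b \<gamma> = 0" using bT b g unfolding T_def by auto
    have ab: "a \<noteq> b" using aT bT by auto
    have db: "d \<noteq> b" using dT bT by auto
    have bb: "b \<bullet> b > 0" using b Delta_nz by auto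
    have ge: "\<gamma> \<bullet> b \<ge> 0"
    proof (rule ccontr)
      assume "\<not> ?thesis"
      then have lt: "\<gamma> \<bullet> b < 0" by simp
      have rP: "refl b \<gamma> \<in> \<Phi>" using Phi_refl b gP Delta_sub by auto
      have "coef b (refl b \<gamma>) = - (2 * (\<gamma> \<bullet> b) / (b \<bullet> b))" using coef_refl_same[OF b] cb by simp
      moreover have "2 * (\<gamma> \<bullet> b) / (b \<bullet> b) < 0" using lt bb by (simp add: divide_neg_pos)
      ultimately have cpos: "coef b (refl b \<gamma>) > 0" by simp
      then have "pos (refl b \<gamma>)" using pos_coef rP b by auto
      moreover have "coef a (refl b \<gamma>) > 0" using coef_refl_other[OF b ab] g by simp
      ultimately have "b \<in> T" using cpos b unfolding T_def by auto
      then show False using bT by simp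
    qed
    have terms: "\<forall>e\<in>\<Delta>. coef e \<gamma> * (e \<bullet> b) \<le> 0"
    proof
      fix e assume e: "e \<in> \<Delta>"
      show "coef e \<gamma> * (e \<bullet> b) \<le> 0"
      proof (cases "e = b")
        case True then show ?thesis using cb by simp
      next
        case False
        then have "e \<bullet> b \<le> 0" using simple_inner e b by auto
        moreover have "coef e \<gamma> \<ge> 0" using g e by (auto simp: pos_def)
        ultimately show ?thesis by (simp add: mult_nonneg_nonpos)
      qed
    qed
    have "(\<Sum>e\<in>\<Delta>. - (coef e \<gamma> * (e \<bullet> b))) = - (\<gamma> \<bullet> b)"
      by (simp add: inner_expand[of \<gamma> b] sum_negf)
    moreover have "- (\<gamma> \<bullet> b) \<le> 0" using ge by simp
    moreover have "(\<Sum>e\<in>\<Delta>. - (coef e \<gamma> * (e \<bullet> b))) \<ge> 0" using terms by (intro sum_nonneg) auto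
    ultimately have "(\<Sum>e\<in>\<Delta>. - (coef e \<gamma> * (e \<bullet> b))) = 0" by linarith
    then have "\<forall>e\<in>\<Delta>. - (coef e \<gamma> * (e \<bullet> b)) = 0"
      using sum_nonneg_eq_0_iff[OF finD, of "\<lambda>e. - (coef e \<gamma> * (e \<bullet> b))"] terms by auto
    then have "coef d \<gamma> * (d \<bullet> b) = 0" using g by auto
    then show ?thesis using g by simp
  qed
  define SIDE where "SIDE \<gamma> \<longleftrightarrow> (\<forall>d\<in>\<Delta>. coef d \<gamma> \<noteq> 0 \<longrightarrow> d \<in> T) \<or> (\<forall>d\<in>\<Delta>. coef d \<gamma> \<noteq> 0 \<longrightarrow> d \<notin> T)" for \<gamma>
  have side: "SIDE \<gamma>" if "pos \<gamma>" for \<gamma>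
    using that
  proof (induction "card {\<delta>\<in>\<Phi>. ht \<delta> < ht \<gamma>}" arbitrary: \<gamma> rule: less_induct)
    case less
    have p: "pos \<gamma>" by fact
    have gP: "\<gamma> \<in> \<Phi>" using p pos_def by auto
    show ?case
    proof (cases "\<gamma> \<in> \<Delta>")
      case True
      then show ?thesis unfolding SIDE_def using coef_basis[OF True] by auto
    next
      case False
      have gnz: "\<gamma> \<noteq> 0" using gP Phi_nz by auto
      then have "\<gamma> \<bullet> \<gamma> > 0" by simp
      then have sumpos: "(\<Sum>d\<in>\<Delta>. coef d \<gamma> * (d \<bullet> \<gamma>)) > 0" using inner_expand[of \<gamma> \<gamma>] by simp
      obtain \<beta> where \<beta>: "\<beta> \<in> \<Delta>" "coef \<beta> \<gamma> * (\<beta> \<bullet> \<gamma>) > 0"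
      proof (rule ccontr)
        assume "\<not> thesis"
        then have "\<forall>d\<in>\<Delta>. coef d \<gamma> * (d \<bullet> \<gamma>) \<le> 0" using that by force
        then have "(\<Sum>d\<in>\<Delta>. coef d \<gamma> * (d \<bullet> \<gamma>)) \<le> 0" by (intro sum_nonpos) auto
        then show False using sumpos by simp
      qed
      have cbge: "coef \<beta> \<gamma> \<ge> 0" using p \<beta> by (auto simp: pos_def)
      then have cbpos: "coef \<beta> \<gamma> > 0" and ipos: "\<beta> \<bullet> \<gamma> > 0"
        using \<beta>(2) by (auto simp: zero_less_mult_iff)
      have bnz: "\<beta> \<noteq> 0" using \<beta> Delta_nz by auto
      then have bb: "\<beta> \<bullet> \<beta> > 0" by simp
      define c where "c = 2 * (\<gamma> \<bullet> \<beta>) / (\<beta> \<bullet> \<beta>)"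
      have cpos: "c > 0" unfolding c_def using ipos bb by (simp add: inner_commute)
      define \<gamma>' where "\<gamma>' = refl \<beta> \<gamma>"
      have g'P: "\<gamma>' \<in> \<Phi>" unfolding \<gamma>'_def using Phi_refl \<beta> gP Delta_sub by auto
      have other: "coef d \<gamma>' = coef d \<gamma>" if "d \<noteq> \<beta>" for d
        unfolding \<gamma>'_def using coef_refl_other[OF \<beta>(1) that] .
      have "\<exists>d\<in>\<Delta>. d \<noteq> \<beta> \<and> coef d \<gamma> \<noteq> 0"
      proof (rule ccontr)
        assume "\<not> ?thesis"
        then have "\<gamma> = \<beta> \<or> \<gamma> = - \<beta>" using single_support[OF gP \<beta>(1)] by auto
        moreover have "\<gamma> \<noteq> \<beta>" using False \<beta> by auto
        moreover have "\<gamma> \<noteq> - \<beta>"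
        proof
          assume "\<gamma> = - \<beta>"
          then have "coef \<beta> \<gamma> = -1" using \<beta> by (simp add: coef_uminus coef_basis)
          then show False using cbpos by simp
        qed
        ultimately show False by auto
      qed
      then obtain d0 where d0: "d0 \<in> \<Delta>" "d0 \<noteq> \<beta>" "coef d0 \<gamma> \<noteq> 0" by auto
      then have "coef d0 \<gamma>' > 0" using other p by (auto simp: pos_def less_le)
      then have p': "pos \<gamma>'" using pos_coef g'P d0 by auto
      have "ht \<gamma>' = (\<Sum>d\<in>\<Delta>. coef d \<gamma> - c * (if d = \<beta> then 1 else 0))"
        unfolding ht_def \<gamma>'_def c_def by (intro sum.cong) (auto simp: coef_refl coef_basis[OF \<beta>(1)])
      also have "\<dots> = ht \<gamma> - c * (\<Sum>d\<in>\<Delta>. (if d = \<beta> then 1 else 0))"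
        by (simp add: ht_def sum_subtractf sum_distrib_left)
      also have "\<dots> = ht \<gamma> - c" using \<beta>(1) finD by simp
      finally have htlt: "ht \<gamma>' < ht \<gamma>" using cpos by simp
      have "{\<delta>\<in>\<Phi>. ht \<delta> < ht \<gamma>'} \<subset> {\<delta>\<in>\<Phi>. ht \<delta> < ht \<gamma>}"
        using htlt g'P by auto
      then have "card {\<delta>\<in>\<Phi>. ht \<delta> < ht \<gamma>'} < card {\<delta>\<in>\<Phi>. ht \<delta> < ht \<gamma>}"
        by (rule psubset_card_mono[rotated]) (use finPhi in auto)
      then have S': "SIDE \<gamma>'" using less.hyps p' by blast
      have ip': "\<gamma>' \<bullet> \<beta> = - (\<gamma> \<bullet> \<beta>)"
        unfolding \<gamma>'_def using bb by (simp add: refl_def inner_diff_left field_simps)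
      have ig: "\<gamma> \<bullet> \<beta> > 0" using ipos by (simp add: inner_commute)
      have supp: "coef d \<gamma> \<noteq> 0 \<Longrightarrow> d \<noteq> \<beta> \<Longrightarrow> coef d \<gamma>' \<noteq> 0" for d using other by auto
      show ?thesis
      proof (cases "\<forall>d\<in>\<Delta>. coef d \<gamma>' \<noteq> 0 \<longrightarrow> d \<in> T")
        case True
        show ?thesis
        proof (cases "\<beta> \<in> T")
          case True
          then show ?thesis unfolding SIDE_def using \<open>\<forall>d\<in>\<Delta>. coef d \<gamma>' \<noteq> 0 \<longrightarrow> d \<in> T\<close> supp by metis
        next
          case bT: False
          have "\<gamma>' \<bullet> \<beta> = (\<Sum>e\<in>\<Delta>. coef e \<gamma>' * (e \<bullet> \<beta>))" by (rule inner_expand)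
          also have "\<dots> = 0"
            using True orth[OF _ \<beta>(1) bT] by (intro sum.neutral) auto
          finally show ?thesis using ip' ig by simp
        qed
      next
        case False
        then have F: "\<forall>d\<in>\<Delta>. coef d \<gamma>' \<noteq> 0 \<longrightarrow> d \<notin> T" using S' unfolding SIDE_def by blast
        show ?thesis
        proof (cases "\<beta> \<in> T")
          case False
          then show ?thesis unfolding SIDE_def using F supp by metis
        next
          case bT: True
          have "\<gamma>' \<bullet> \<beta> = (\<Sum>e\<in>\<Delta>. coef e \<gamma>' * (e \<bullet> \<beta>))" by (rule inner_expand)
          also have "\<dots> = 0"
            using F orth[OF bT] by (intro sum.neutral) (auto simp: inner_commute)
          finally show ?thesis using ip' ig by simp
        qed
      qed
    qed
  qed
  define A where "A = {\<gamma>\<in>\<Phi>. \<forall>d\<in>\<Delta>. coef d \<gamma> \<noteq> 0 \<longrightarrow> d \<in> T}"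
  define B where "B = \<Phi> - A"
  have Ane: "A \<noteq> {}" using a aT Delta_sub coef_basis[OF a] unfolding A_def by auto
  obtain b where b: "b \<in> \<Delta>" "b \<notin> S" using S by auto
  have "b \<notin> A"
  proof
    assume "b \<in> A"
    then have "b \<in> T" using b(1) coef_basis[OF b(1), of b] unfolding A_def by auto
    then show False using TS b by auto
  qed
  then have "b \<in> B" using b Delta_sub unfolding B_def by auto
  then have Bne: "B \<noteq> {}" by auto
  have yside: "\<forall>e\<in>\<Delta>. coef e y \<noteq> 0 \<longrightarrow> e \<notin> T" if y: "y \<in> B" for y
  proof -
    have yP: "y \<in> \<Phi>" and yA: "y \<notin> A" using y B_def by auto
    show ?thesis
    proof (cases "pos y")
      case True
      then show ?thesis using side[OF True] yA yP unfolding SIDE_def A_def by auto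
    next
      case False
      then have "neg y" using pos_or_neg yP by auto
      then have "pos (- y)" using neg_uminus[of "- y"] by simp
      then show ?thesis using side[of "- y"] yA yP unfolding SIDE_def A_def by (auto simp: coef_uminus)
    qed
  qed
  have orthAB: "\<forall>x\<in>A. \<forall>y\<in>B. x \<bullet> y = 0"
  proof (intro ballI)
    fix x y assume x: "x \<in> A" and y: "y \<in> B"
    have "x \<bullet> y = (\<Sum>d\<in>\<Delta>. coef d x * (d \<bullet> y))" by (rule inner_expand)
    also have "\<dots> = 0"
    proof (rule sum.neutral, rule ballI)
      fix d assume d: "d \<in> \<Delta>"
      show "coef d x * (d \<bullet> y) = 0"
      proof (cases "coef d x = 0")
        case False
        then have dT: "d \<in> T" using x d unfolding A_def by auto
        have "d \<bullet> y = y \<bullet> d" by (simp add: inner_commute)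
        also have "\<dots> = (\<Sum>e\<in>\<Delta>. coef e y * (e \<bullet> d))" by (rule inner_expand)
        also have "\<dots> = 0"
          using yside[OF y] orth[OF dT] by (intro sum.neutral) (auto simp: inner_commute)
        finally show ?thesis by simp
      qed simp
    qed
    finally show "x \<bullet> y = 0" .
  qed
  have "A \<union> B = \<Phi>" "A \<inter> B = {}" unfolding A_def B_def by auto
  then show False using irr Ane Bne orthAB unfolding irreducible_rs_def by blast
qed

end

theorem lemma3p7:
  fixes \<Phi> \<Delta> \<Delta>P :: "'a::euclidean_space set" and w0 wP :: "'a \<Rightarrow> 'a"
  assumes "root_system \<Phi>" and "irreducible_rs \<Phi>" and "is_base \<Phi> \<Delta>"
    and "\<Delta>P \<subset> \<Delta>"
    and "w0 \<in> weyl \<Delta>" and "\<forall>v\<in>weyl \<Delta>. len \<Delta> v \<le> len \<Delta> w0"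
    and "wP \<in> weyl \<Delta>P" and "\<forall>v\<in>weyl \<Delta>P. len \<Delta> v \<le> len \<Delta> wP"
  shows "Gamma \<Phi> \<Delta> (w0 \<circ> wP) = \<Delta>"
proof -
  interpret R: RS \<Phi> \<Delta> using assms(1,3) by unfold_locales
  have "\<alpha> \<in> Gamma \<Phi> \<Delta> (w0 \<circ> wP)" if \<alpha>: "\<alpha> \<in> \<Delta>" for \<alpha>
  proof -
    obtain ws0 where ws0: "set ws0 \<subseteq> \<Delta>" "wordprod ws0 = w0" using assms(5) by (auto simp: weyl_def)
    obtain ps where ps: "set ps \<subseteq> \<Delta>P" "wordprod ps = wP" using assms(7) by (auto simp: weyl_def)
    have psD: "set ps \<subseteq> \<Delta>" using ps assms(4) by auto
    have psP: "set ps \<subseteq> \<Phi>" using psD R.Delta_sub by auto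
    have ws0P: "set ws0 \<subseteq> \<Phi>" using ws0 R.Delta_sub by auto
    have xw: "w0 \<circ> wP = wordprod (ws0 @ ps)" using ws0 ps by (simp add: wordprod_append)
    then have xW: "w0 \<circ> wP \<in> weyl \<Delta>" using R.weyl_word[of "ws0 @ ps"] ws0 psD by auto
    obtain rs where rs: "set rs \<subseteq> \<Delta>" "length rs = len \<Delta> (w0 \<circ> wP)" "wordprod rs = w0 \<circ> wP"
      using R.reduced_ex[OF xW] by auto
    have "\<alpha> \<in> set rs"
    proof (rule ccontr)
      assume nin: "\<alpha> \<notin> set rs"
      have fixx: "R.coef \<alpha> (w0 (wP y)) = R.coef \<alpha> y" for y
        using R.coef_fix[OF rs(1) nin, of y] rs(3) by simp
      have w0neg: "\<forall>d\<in>\<Delta>. R.neg (w0 d)"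
      proof
        fix d assume d: "d \<in> \<Delta>"
        have "w0 d \<in> \<Phi>" using R.wordprod_Phi[OF ws0P, of d] d R.Delta_sub ws0 by auto
        moreover have "\<not> R.pos (w0 d)"
        proof
          assume "R.pos (w0 d)"
          then have "len \<Delta> w0 < len \<Delta> (w0 \<circ> refl d)" using R.len_up[OF assms(5) d] by simp
          moreover have "w0 \<circ> refl d = wordprod (ws0 @ [d])" using ws0 by (simp add: wordprod_append)
          then have "w0 \<circ> refl d \<in> weyl \<Delta>" using R.weyl_word[of "ws0 @ [d]"] ws0 d by auto
          ultimately show False using assms(6) by fastforce
        qed
        ultimately show "R.neg (w0 d)" using R.pos_or_neg by auto
      qed
      have lin0: "linear w0" using wordprod_linear[of ws0] ws0 by simp
      have w0negall: "R.neg (w0 \<gamma>)" if "R.pos \<gamma>" for \<gamma>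
      proof -
        have "\<gamma> \<in> \<Phi>" using that R.pos_def by auto
        then have "w0 \<gamma> \<in> \<Phi>" using R.wordprod_Phi[OF ws0P] ws0 by auto
        then show ?thesis using R.maps_neg[OF lin0 w0neg that] by simp
      qed
      show False
      proof (cases "\<alpha> \<in> \<Delta>P")
        case True
        obtain \<gamma> b where g: "R.pos \<gamma>" "R.coef \<alpha> \<gamma> > 0" "b \<in> \<Delta> - \<Delta>P" "R.coef b \<gamma> > 0"
          using R.exists_root[OF assms(2) \<alpha>, of \<Delta>P] assms(4) by auto
        have gP: "\<gamma> \<in> \<Phi>" using g R.pos_def by auto
        have wg: "wP \<gamma> \<in> \<Phi>" using R.wordprod_Phi[OF psP gP] ps by simp
        have xg: "w0 (wP \<gamma>) \<in> \<Phi>" using R.wordprod_Phi[OF ws0P wg] ws0 by simp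
        have "R.pos (w0 (wP \<gamma>))" using R.pos_coef[OF xg \<alpha>] fixx[of \<gamma>] g by simp
        moreover have "R.coef b (wP \<gamma>) = R.coef b \<gamma>"
          using R.coef_fix[OF psD, of b \<gamma>] ps g by auto
        then have "R.pos (wP \<gamma>)" using R.pos_coef[OF wg, of b] g by simp
        then have "R.neg (w0 (wP \<gamma>))" by (rule w0negall)
        ultimately show False using R.not_both by blast
      next
        case False
        define y where "y = wordprod (rev ps) \<alpha>"
        have wy: "wP y = \<alpha>" unfolding y_def using wordprod_inv_rev[OF R.nz_set[OF psP]] ps by simp
        have "R.coef \<alpha> y = R.coef \<alpha> \<alpha>" unfolding y_def
          using R.coef_fix[of "rev ps" \<alpha> \<alpha>] psD ps False by auto
        then have "R.coef \<alpha> y = 1" using R.coef_basis[OF \<alpha>] by simp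
        then have "R.coef \<alpha> (w0 \<alpha>) = 1" using fixx[of y] wy by simp
        moreover have "R.neg (w0 \<alpha>)" using w0neg \<alpha> by auto
        ultimately show False using \<alpha> by (auto simp: R.neg_def)
      qed
    qed
    then have "bruhat_le \<Phi> \<Delta> (refl \<alpha>) (wordprod rs)" using R.subword_bruhat[OF rs(1)] rs by simp
    then show ?thesis using rs \<alpha> by (simp add: Gamma_def)
  qed
  then show ?thesis by (auto simp: Gamma_def)
qed

end
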